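(* Consider an instance of $\mathrm{BAL}(\mu,\nu)$ (heterogeneous setting). Let $\varepsilon>0$ and assume $k\ge 2(\nu-1)/\varepsilon$. If $\mathcal S^{[1]}\subseteq\hat V$ is the set of cardinality $\lfloor k/(\nu-1)\rfloor$ selected in the first iteration of $\textsc{GreedyIter}(\varepsilon,\delta,\mathcal I,\nu,k)$, then with probability at least $1-\delta/\nu$, \[ \Phi^{\ge1}_2(\mathcal I,\mathcal S^{[1]})\ \ge\ \frac{1-\frac1e-\varepsilon}{\nu}\cdot\Phi^{\ge1}(\mathcal I,\mathcal S^*_{\ge1}), \] where $\mathcal S^*_{\ge1}$ is a set of cardinality $k$ maximizing $\Phi^{\ge1}(\mathcal I,\cdot)$.
   Context: Triggering model: for a directed graph $G=(V,E)$ and $p:E\to[0,1]$, an outcome $X=(T_v)_{v\in V}$ is obtained by having each node $v$ independently choose a subset $T_v$ of its in-neighbours $N_v$, with $T_v=S$ with probability $\prod_{u\in S}p_{uv}\prod_{u\in N_v\setminus S}(1-p_{uv})$; $\rho_X(A)$ is the set of nodes reachable from $A\subseteq V$ via arcs $\{(u,v):u\in T_v\}$. $\mathrm{BAL}(\mu,\nu)$ for integer constants $\mu\ge\nu\ge2$: instance = directed graph $G=(V,E)$, probability functions $p_1,\dots,p_\mu:E\to[0,1]$, seed sets $\mathcal I=(I_1,\dots,I_\mu)$, budget $k\ge2$; standing assumptions $\nu\le k\le\nu|V|$, $|V|\ge\mu$. Let $\hat V=V\times[\mu]$; $\mathcal S\subseteq\hat V$ is identified with $(S_1,\dots,S_\mu)$,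 $S_i=\{v:(v,i)\in\mathcal S\}$; unions are componentwise. An outcome profile $\mathcal X=(X_1,\dots,X_\mu)$ consists of independent outcomes, $X_i$ w.r.t. $p_i$. Campaign $i$ reaches $v$ from seeds $A_i$ if $v\in\rho_{X_i}(A_i)$. For a seed sequence $\mathcal R$ and integers $\ell,\beta\ge1$, $\Phi^{\ge\ell}_\beta(\mathcal R,\mathcal S)$ is the expected number of nodes reached by at least $\ell$ campaigns from seeds $\mathcal R$ and by none or at least $\beta$ campaigns from seeds $\mathcal R\cup\mathcal S$. $\Phi^{\ge1}(\mathcal I,\cdot)$ denotes $\Phi^{\ge1}_\nu(\mathcal I,\cdot)$. Subroutine $\mathtt{approx}(f,\mathcal S,\dots,\epsilon,\delta)$: with $T=|V|^2\ln(1/\delta)/\epsilon^2$, draw $T$ independent outcome profiles, compute for each the realized value of the quantity whose expectation defines $f(\mathcal S)$, return the average. Subroutine $\textsc{Greedy}(f,\epsilon,\delta,\cdot,\cdot,m)$: $\delta'=\delta/(m|\hat V|)$, $\epsilon'=\epsilon/(em)$, $\mathcal S=\emptyset$; while $|\mathcal S|\le m$ add an element $v\in\hat V$ maximizing $\mathtt{approx}(f,\mathcal S\cup\{v\},\dots,\epsilon',\delta')$; return $\mathcal S$. Algorithm $\textsc{GreedyIter}(\varepsilon,\delta,\mathcal I,\nu,k)$: $\delta'=\delta/\nu$, $\varepsilon'=\varepsilon/2$, $\mathcal R^{[1]}=\mathcal I$; for $\ell=1,\dots,\nu-1$: $\mathcal S^{[\ell]}=\textsc{Greedy}(\Phi^{\ge\ell}_{\ell+1}(\mathcal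 R^{[\ell]},\cdot),\varepsilon',\delta',\mathcal R^{[\ell]},\ell+1,\lfloor k/(\nu-1)\rfloor)$, $\mathcal R^{[\ell+1]}=\mathcal R^{[\ell]}\cup\mathcal S^{[\ell]}$; return $\bigcup_\ell\mathcal S^{[\ell]}$. *)

theory Defs
  imports "HOL-Probability.Probability"
begin

type_synonym 'v outcome = "'v \<Rightarrow> 'v set"
type_synonym 'v profile = "nat \<Rightarrow> 'v outcome"

definition in_nbrs :: "('v \<times> 'v) set \<Rightarrow> 'v \<Rightarrow> 'v set" where
  "in_nbrs E v = {u. (u, v) \<in> E}"

definition node_pmf :: "('v \<times> 'v) set \<Rightarrow> ('v \<times> 'v \<Rightarrow> real) \<Rightarrow> 'v \<Rightarrow> 'v set pmf" where
  "node_pmf E p v =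
     map_pmf (\<lambda>b. {u \<in> in_nbrs E v. b u})
       (Pi_pmf (in_nbrs E v) False (\<lambda>u. bernoulli_pmf (p (u, v))))"

definition outcome_pmf :: "'v set \<Rightarrow> ('v \<times> 'v) set \<Rightarrow> ('v \<times> 'v \<Rightarrow> real) \<Rightarrow> 'v outcome pmf" where
  "outcome_pmf V E p = Pi_pmf V {} (node_pmf E p)"

definition reach :: "'v outcome \<Rightarrow> 'v set \<Rightarrow> 'v set" where
  "reach X A = {v. \<exists>a\<in>A. (a, v) \<in> {(u, w). u \<in> X w}\<^sup>*}"

definition profile_pmf ::
  "'v set \<Rightarrow> ('v \<times> 'v) set \<Rightarrow> (nat \<Rightarrow> 'v \<times> 'v \<Rightarrow> real) \<Rightarrow> nat \<Rightarrow> 'v profile pmf" where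
  "profile_pmf V E p \<mu> = Pi_pmf {1..\<mu>} (\<lambda>_. {}) (\<lambda>i. outcome_pmf V E (p i))"

(* ---------- Seed sequences as subsets of V x [mu] ---------- *)

definition Vhat :: "'v set \<Rightarrow> nat \<Rightarrow> ('v \<times> nat) set" where
  "Vhat V \<mu> = V \<times> {1..\<mu>}"

definition comp :: "('v \<times> nat) set \<Rightarrow> nat \<Rightarrow> 'v set" where
  "comp S i = {v. (v, i) \<in> S}"

definition reach_count :: "nat \<Rightarrow> 'v profile \<Rightarrow> ('v \<times> nat) set \<Rightarrow> 'v \<Rightarrow> nat" where
  "reach_count \<mu> Xs R v = card {i \<in> {1..\<mu>}. v \<in> reach (Xs i) (comp R i)}"

definition phi_real :: "'v set \<Rightarrow> nat \<Rightarrow> nat \<Rightarrow> nat \<Rightarrow> ('v \<times> nat) set \<Rightarrow> ('v \<times> nat) set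
    \<Rightarrow> 'v profile \<Rightarrow> nat" where
  "phi_real V \<mu> l \<beta> R S Xs =
     card {v \<in> V. l \<le> reach_count \<mu> Xs R v \<and>
                  (reach_count \<mu> Xs (R \<union> S) v = 0 \<or> \<beta> \<le> reach_count \<mu> Xs (R \<union> S) v)}"

definition Phi :: "'v set \<Rightarrow> ('v \<times> 'v) set \<Rightarrow> (nat \<Rightarrow> 'v \<times> 'v \<Rightarrow> real) \<Rightarrow> nat
    \<Rightarrow> nat \<Rightarrow> nat \<Rightarrow> ('v \<times> nat) set \<Rightarrow> ('v \<times> nat) set \<Rightarrow> real" where
  "Phi V E p \<mu> l \<beta> R S =
     measure_pmf.expectation (profile_pmf V E p \<mu>) (\<lambda>Xs. real (phi_real V \<mu> l \<beta> R S Xs))"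

definition num_samples :: "'v set \<Rightarrow> real \<Rightarrow> real \<Rightarrow> nat" where
  "num_samples V \<epsilon> \<delta> = nat \<lceil>real (card V) ^ 2 * ln (1 / \<delta>) / \<epsilon> ^ 2\<rceil>"

definition approx_pmf :: "'v set \<Rightarrow> ('v \<times> 'v) set \<Rightarrow> (nat \<Rightarrow> 'v \<times> 'v \<Rightarrow> real) \<Rightarrow> nat
    \<Rightarrow> ('v profile \<Rightarrow> real) \<Rightarrow> real \<Rightarrow> real \<Rightarrow> real pmf" where
  "approx_pmf V E p \<mu> g \<epsilon> \<delta> =
     (let T = num_samples V \<epsilon> \<delta> in
      map_pmf (\<lambda>xs. (\<Sum>j<T. g (xs j)) / real T)
        (Pi_pmf {..<T} (\<lambda>_ _. {}) (\<lambda>_. profile_pmf V E p \<mu>)))"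

definition greedy_step :: "'v set \<Rightarrow> ('v \<times> 'v) set \<Rightarrow> (nat \<Rightarrow> 'v \<times> 'v \<Rightarrow> real) \<Rightarrow> nat
    \<Rightarrow> (('v \<times> nat) set \<Rightarrow> ('v \<times> nat \<Rightarrow> real) \<Rightarrow> 'v \<times> nat)
    \<Rightarrow> (('v \<times> nat) set \<Rightarrow> 'v profile \<Rightarrow> real) \<Rightarrow> real \<Rightarrow> real
    \<Rightarrow> ('v \<times> nat) set \<Rightarrow> ('v \<times> nat) set pmf" where
  "greedy_step V E p \<mu> tb f \<epsilon>' \<delta>' S =
     map_pmf (\<lambda>vals. S \<union> {tb (Vhat V \<mu> - S) vals})
       (Pi_pmf (Vhat V \<mu> - S) 0 (\<lambda>c. approx_pmf V E p \<mu> (f (S \<union> {c})) \<epsilon>' \<delta>'))"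

primrec greedy_loop :: "'v set \<Rightarrow> ('v \<times> 'v) set \<Rightarrow> (nat \<Rightarrow> 'v \<times> 'v \<Rightarrow> real) \<Rightarrow> nat
    \<Rightarrow> (('v \<times> nat) set \<Rightarrow> ('v \<times> nat \<Rightarrow> real) \<Rightarrow> 'v \<times> nat)
    \<Rightarrow> (('v \<times> nat) set \<Rightarrow> 'v profile \<Rightarrow> real) \<Rightarrow> real \<Rightarrow> real
    \<Rightarrow> nat \<Rightarrow> ('v \<times> nat) set pmf" where
  "greedy_loop V E p \<mu> tb f \<epsilon>' \<delta>' 0 = return_pmf {}"
| "greedy_loop V E p \<mu> tb f \<epsilon>' \<delta>' (Suc n) =
     bind_pmf (greedy_loop V E p \<mu> tb f \<epsilon>' \<delta>' n) (greedy_step V E p \<mu> tb f \<epsilon>' \<delta>')"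

text \<open>Greedy(f, eps, delta, ., ., m): m greedy steps with eps' = eps/(e m),
  delta' = delta/(m |Vhat|); f is given by its realized value.\<close>
definition greedy_pmf :: "'v set \<Rightarrow> ('v \<times> 'v) set \<Rightarrow> (nat \<Rightarrow> 'v \<times> 'v \<Rightarrow> real) \<Rightarrow> nat
    \<Rightarrow> (('v \<times> nat) set \<Rightarrow> ('v \<times> nat \<Rightarrow> real) \<Rightarrow> 'v \<times> nat)
    \<Rightarrow> (('v \<times> nat) set \<Rightarrow> 'v profile \<Rightarrow> real) \<Rightarrow> real \<Rightarrow> real \<Rightarrow> nat
    \<Rightarrow> ('v \<times> nat) set pmf" where
  "greedy_pmf V E p \<mu> tb f \<epsilon> \<delta> m =
     greedy_loop V E p \<mu> tb f (\<epsilon> / (exp 1 * real m)) (\<delta> / (real m * real (card (Vhat V \<mu>)))) m"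

text \<open>Distribution of S^[1], the set selected in the first iteration of
  GreedyIter(eps, delta, I, nu, k): Greedy(Phi^{>=1}_2(I, .), eps/2, delta/nu, I, 2, floor(k/(nu-1))).\<close>
definition greedyiter_first :: "'v set \<Rightarrow> ('v \<times> 'v) set \<Rightarrow> (nat \<Rightarrow> 'v \<times> 'v \<Rightarrow> real) \<Rightarrow> nat
    \<Rightarrow> (('v \<times> nat) set \<Rightarrow> ('v \<times> nat \<Rightarrow> real) \<Rightarrow> 'v \<times> nat)
    \<Rightarrow> real \<Rightarrow> real \<Rightarrow> ('v \<times> nat) set \<Rightarrow> nat \<Rightarrow> nat \<Rightarrow> ('v \<times> nat) set pmf" where
  "greedyiter_first V E p \<mu> tb \<epsilon> \<delta> I \<nu> k =
     greedy_pmf V E p \<mu> tb (\<lambda>S Xs. real (phi_real V \<mu> 1 2 I S Xs))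
       (\<epsilon> / 2) (\<delta> / real \<nu>) (k div (\<nu> - 1))"

end

theory Submission
  imports Defs
begin


lemma hoeffding_pmf:
  fixes P :: "'a pmf" and g :: "'a \<Rightarrow> real" and T :: nat
  assumes T: "0 < T" and bnd: "\<And>x. g x \<in> {0..B}" and B: "0 < B" and e: "\<epsilon> \<ge> 0"
  shows "measure_pmf.prob (map_pmf (\<lambda>xs. (\<Sum>j<T. g (xs j)) / real T) (Pi_pmf {..<T} d (\<lambda>_. P)))
           {y. \<bar>y - measure_pmf.expectation P g\<bar> \<ge> \<epsilon>} \<le> 2 * exp (-2 * real T * \<epsilon>\<^sup>2 / B\<^sup>2)"
proof -
  define coins where "coins = Pi_pmf {..<T} d (\<lambda>_. P)"
  have comp: "i < T \<Longrightarrow> map_pmf (\<lambda>f. f i) coins = P" for i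
    unfolding coins_def by (subst Pi_pmf_component) auto
  interpret H: Hoeffding_ineq_iid coins "{..<T}" "\<lambda>i f. g (f i)" "\<lambda>f. g (f 0)" 0 B "measure_pmf.expectation P g"
  proof unfold_locales
    show "prob_space.indep_vars (measure_pmf coins) (\<lambda>_. borel) (\<lambda>i f. g (f i)) {..<T}"
      unfolding coins_def
      by (intro prob_space.indep_vars_compose2[OF _ indep_vars_Pi_pmf])
         (auto simp: measure_pmf.prob_space_axioms)
  next
    have "measure_pmf.expectation coins (\<lambda>f. g (f 0)) = measure_pmf.expectation (map_pmf (\<lambda>f. f 0) coins) g"
      by simp
    also have "map_pmf (\<lambda>f. f 0) coins = P" using comp T by simp
    finally show "measure_pmf.expectation P g \<equiv> measure_pmf.expectation coins (\<lambda>f. g (f 0))" by simp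
  next
    fix i assume i: "i \<in> {..<T}"
    have "distr (measure_pmf coins) borel (\<lambda>f. g (f i)) = distr (measure_pmf (map_pmf (\<lambda>f. f i) coins)) borel g"
      unfolding map_pmf_rep_eq by (subst distr_distr) (auto simp: o_def)
    also have "\<dots> = distr (measure_pmf (map_pmf (\<lambda>f. f 0) coins)) borel g"
      using comp i T by simp
    also have "\<dots> = distr (measure_pmf coins) borel (\<lambda>f. g (f 0))"
      unfolding map_pmf_rep_eq by (subst distr_distr) (auto simp: o_def)
    finally show "distr (measure_pmf coins) borel (\<lambda>f. g (f i)) = distr (measure_pmf coins) borel (\<lambda>f. g (f 0))" .
  qed (use bnd in auto)
  have ne: "{..<T} \<noteq> {}" using T by auto
  have "measure_pmf.prob coins {x. \<bar>(\<Sum>i\<in>{..<T}. g (x i)) / real (card {..<T::nat}) - measure_pmf.expectation P g\<bar> \<ge> \<epsilon>}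
        \<le> 2 * exp (-2 * real (card {..<T::nat}) * \<epsilon>\<^sup>2 / (B - 0)\<^sup>2)"
    using H.Hoeffding_ineq_abs_ge'[OF e B ne] by simp
  thus ?thesis unfolding coins_def by simp
qed



definition camps :: "nat \<Rightarrow> 'v profile \<Rightarrow> ('v \<times> nat) set \<Rightarrow> 'v \<Rightarrow> nat set" where
  "camps \<mu> Xs R v = {i\<in>{1..\<mu>}. v \<in> reach (Xs i) (Defs.comp R i)}"

lemma rc_camps: "reach_count \<mu> Xs R v = card (camps \<mu> Xs R v)"
  by (simp add: reach_count_def camps_def)
lemma finite_camps[simp]: "finite (camps \<mu> Xs R v)" by (simp add: camps_def)
lemma dcomp_union: "Defs.comp (A \<union> B) i = Defs.comp A i \<union> Defs.comp B i" by (auto simp: Defs.comp_def)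
lemma reach_union: "reach X (A \<union> B) = reach X A \<union> reach X B" by (auto simp: reach_def)
lemma reach_mono: "A \<subseteq> B \<Longrightarrow> reach X A \<subseteq> reach X B" by (auto simp: reach_def)
lemma reach_self: "a \<in> A \<Longrightarrow> a \<in> reach X A" by (auto simp: reach_def)
lemma reach_empty: "reach X {} = {}" by (auto simp: reach_def)
lemma dcomp_mono: "A \<subseteq> B \<Longrightarrow> Defs.comp A i \<subseteq> Defs.comp B i" by (auto simp: Defs.comp_def)
lemma camps_mono: "A \<subseteq> B \<Longrightarrow> camps \<mu> Xs A v \<subseteq> camps \<mu> Xs B v"
  unfolding camps_def using reach_mono[OF dcomp_mono] by blast
lemma rc_mono: "A \<subseteq> B \<Longrightarrow> reach_count \<mu> Xs A v \<le> reach_count \<mu> Xs B v"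
  by (simp add: rc_camps card_mono camps_mono)

definition NS where
  "NS V \<mu> \<beta> I S Xs = {v\<in>V. 1 \<le> reach_count \<mu> Xs I v \<and>
      (reach_count \<mu> Xs (I\<union>S) v = 0 \<or> \<beta> \<le> reach_count \<mu> Xs (I\<union>S) v)}"

lemma phi_NS: "phi_real V \<mu> 1 \<beta> I S Xs = card (NS V \<mu> \<beta> I S Xs)"
  by (simp add: phi_real_def NS_def)

lemma NS2_iff: "v \<in> NS V \<mu> 2 I S Xs \<longleftrightarrow>
   v \<in> V \<and> 1 \<le> reach_count \<mu> Xs I v \<and> 2 \<le> reach_count \<mu> Xs (I \<union> S) v"
  using rc_mono[of I "I \<union> S" \<mu> Xs v] by (auto simp: NS_def)

lemma NS2_mono: "S \<subseteq> S' \<Longrightarrow> NS V \<mu> 2 I S Xs \<subseteq> NS V \<mu> 2 I S' Xs"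
proof
  fix v assume "S \<subseteq> S'" "v \<in> NS V \<mu> 2 I S Xs"
  moreover have "reach_count \<mu> Xs (I\<union>S) v \<le> reach_count \<mu> Xs (I\<union>S') v"
    using \<open>S \<subseteq> S'\<close> by (intro rc_mono) auto
  ultimately show "v \<in> NS V \<mu> 2 I S' Xs" by (auto simp: NS2_iff)
qed

lemma NS_sub: "NS V \<mu> \<beta> I S Xs \<subseteq> V" by (auto simp: NS_def)
lemma NS_nu_2: "2 \<le> \<nu> \<Longrightarrow> NS V \<mu> \<nu> I S Xs \<subseteq> NS V \<mu> 2 I S Xs" by (auto simp: NS_def)

lemma NS2_submod:
  "NS V \<mu> 2 I (S \<union> R) Xs - NS V \<mu> 2 I S Xs \<subseteq> (\<Union>x\<in>R. NS V \<mu> 2 I (S \<union> {x}) Xs - NS V \<mu> 2 I S Xs)"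
proof
  fix v assume v: "v \<in> NS V \<mu> 2 I (S \<union> R) Xs - NS V \<mu> 2 I S Xs"
  let ?C = "camps \<mu> Xs (I \<union> S) v"
  have vV: "v \<in> V" and c1: "1 \<le> card (camps \<mu> Xs I v)"
    and c2: "2 \<le> card (camps \<mu> Xs (I\<union>(S\<union>R)) v)" and n2: "\<not> 2 \<le> card ?C"
    using v by (auto simp: NS2_iff rc_camps)
  have "camps \<mu> Xs I v \<subseteq> ?C" by (rule camps_mono) auto
  hence "card (camps \<mu> Xs I v) \<le> card ?C" by (intro card_mono) auto
  with c1 n2 have "card ?C = 1" by linarith
  then obtain i0 where Ci0: "?C = {i0}" using card_1_singletonE by blast
  have "\<not> camps \<mu> Xs (I\<union>(S\<union>R)) v \<subseteq> {i0}"
  proof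
    assume "camps \<mu> Xs (I\<union>(S\<union>R)) v \<subseteq> {i0}"
    hence "card (camps \<mu> Xs (I\<union>(S\<union>R)) v) \<le> card {i0}" by (intro card_mono) auto
    with c2 show False by simp
  qed
  then obtain j where j: "j \<in> camps \<mu> Xs (I\<union>(S\<union>R)) v" "j \<noteq> i0" by blast
  hence j1: "j \<in> {1..\<mu>}" and vr: "v \<in> reach (Xs j) (Defs.comp (I\<union>S) j \<union> Defs.comp R j)"
    by (auto simp: camps_def dcomp_union Un_assoc)
  have "v \<notin> reach (Xs j) (Defs.comp (I\<union>S) j)" using Ci0 j j1 by (auto simp: camps_def)
  with vr have "v \<in> reach (Xs j) (Defs.comp R j)" by (simp add: reach_union)
  then obtain w where w: "(w,j) \<in> R" "v \<in> reach (Xs j) {w}" by (auto simp: reach_def Defs.comp_def)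
  have i0in: "i0 \<in> camps \<mu> Xs (I \<union> (S \<union> {(w,j)})) v"
    using Ci0 camps_mono[of "I\<union>S" "I \<union> (S \<union> {(w,j)})" \<mu> Xs v] by auto
  have "{w} \<subseteq> Defs.comp (I \<union> (S \<union> {(w,j)})) j" by (auto simp: Defs.comp_def)
  hence "j \<in> camps \<mu> Xs (I \<union> (S \<union> {(w,j)})) v"
    using j1 w(2) reach_mono[of "{w}" "Defs.comp (I \<union> (S \<union> {(w,j)})) j" "Xs j"] by (auto simp: camps_def)
  with i0in have "{i0, j} \<subseteq> camps \<mu> Xs (I \<union> (S \<union> {(w,j)})) v" by auto
  hence "card {i0, j} \<le> card (camps \<mu> Xs (I \<union> (S \<union> {(w,j)})) v)" by (intro card_mono) auto
  hence "2 \<le> card (camps \<mu> Xs (I \<union> (S \<union> {(w,j)})) v)" using j(2) by simp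
  hence "v \<in> NS V \<mu> 2 I (S \<union> {(w,j)}) Xs" using vV c1 by (simp add: NS2_iff rc_camps)
  thus "v \<in> (\<Union>x\<in>R. NS V \<mu> 2 I (S \<union> {x}) Xs - NS V \<mu> 2 I S Xs)" using w(1) v by blast
qed

lemma phi_submod:
  assumes "finite V" "finite R"
  shows "real (phi_real V \<mu> 1 2 I (S\<union>R) Xs) \<le> real (phi_real V \<mu> 1 2 I S Xs)
     + (\<Sum>x\<in>R. real (phi_real V \<mu> 1 2 I (S\<union>{x}) Xs) - real (phi_real V \<mu> 1 2 I S Xs))"
proof -
  let ?N = "\<lambda>S. NS V \<mu> 2 I S Xs"
  have fin: "finite (?N S)" for S using assms(1) NS_sub finite_subset by metis
  have sub: "?N S \<subseteq> ?N (S \<union> T)" for T by (rule NS2_mono) auto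
  have d: "real (card (?N (S \<union> T) - ?N S)) = real (card (?N (S\<union>T))) - real (card (?N S))" for T
    using card_Diff_subset[OF fin sub] card_mono[OF fin sub] by (simp add: of_nat_diff)
  have "card (?N (S \<union> R) - ?N S) \<le> card (\<Union>x\<in>R. ?N (S \<union> {x}) - ?N S)"
    by (intro card_mono NS2_submod) (use assms fin in auto)
  also have "\<dots> \<le> (\<Sum>x\<in>R. card (?N (S \<union> {x}) - ?N S))" by (rule card_UN_le) fact
  finally have "real (card (?N (S \<union> R) - ?N S)) \<le> (\<Sum>x\<in>R. real (card (?N (S \<union> {x}) - ?N S)))"
    by (metis of_nat_le_iff of_nat_sum)
  hence "real (card (?N (S \<union> R))) - real (card (?N S)) \<le> (\<Sum>x\<in>R. real (card (?N (S\<union>{x}))) - real (card (?N S)))"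
    by (simp only: d)
  thus ?thesis by (simp only: phi_NS)
qed

lemma phi_bound: "finite V \<Longrightarrow> phi_real V \<mu> l \<beta> R S Xs \<le> card V"
  unfolding phi_real_def by (rule card_mono) auto

lemma intg: "finite V \<Longrightarrow> integrable (measure_pmf M) (\<lambda>Xs. real (phi_real V \<mu> l \<beta> R S Xs))"
  by (rule measure_pmf.integrable_const_bound[where B="real (card V)"], rule AE_I2) (auto simp: phi_bound)

lemma Phi_mono: "finite V \<Longrightarrow> Phi V E p \<mu> 1 2 I S \<le> Phi V E p \<mu> 1 2 I (S \<union> S')"
  unfolding Phi_def
proof (rule integral_mono)
  assume fV: "finite V"
  fix Xs
  have "NS V \<mu> 2 I S Xs \<subseteq> NS V \<mu> 2 I (S \<union> S') Xs" by (rule NS2_mono) auto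
  hence "card (NS V \<mu> 2 I S Xs) \<le> card (NS V \<mu> 2 I (S \<union> S') Xs)"
    by (rule card_mono[rotated]) (rule finite_subset[OF NS_sub fV])
  thus "real (phi_real V \<mu> 1 2 I S Xs) \<le> real (phi_real V \<mu> 1 2 I (S \<union> S') Xs)"
    unfolding phi_NS by simp
qed (simp_all add: intg)

lemma Phi_nonneg: "0 \<le> Phi V E p \<mu> l \<beta> I S"
  unfolding Phi_def by (rule Bochner_Integration.integral_nonneg) simp

lemma Phi_nu_le: "finite V \<Longrightarrow> 2 \<le> \<nu> \<Longrightarrow> Phi V E p \<mu> 1 \<nu> I S \<le> Phi V E p \<mu> 1 2 I S"
  unfolding Phi_def
proof (rule integral_mono)
  assume fV: "finite V" and nu: "2 \<le> \<nu>"
  fix Xs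
  have "NS V \<mu> \<nu> I S Xs \<subseteq> NS V \<mu> 2 I S Xs" by (rule NS_nu_2) fact
  hence "card (NS V \<mu> \<nu> I S Xs) \<le> card (NS V \<mu> 2 I S Xs)"
    by (rule card_mono[rotated]) (rule finite_subset[OF NS_sub fV])
  thus "real (phi_real V \<mu> 1 \<nu> I S Xs) \<le> real (phi_real V \<mu> 1 2 I S Xs)"
    unfolding phi_NS by simp
qed (simp_all add: intg)

lemma Phi_submod:
  assumes "finite V" "finite R"
  shows "Phi V E p \<mu> 1 2 I (S\<union>R) \<le> Phi V E p \<mu> 1 2 I S
     + (\<Sum>x\<in>R. Phi V E p \<mu> 1 2 I (S\<union>{x}) - Phi V E p \<mu> 1 2 I S)"
proof -
  let ?M = "measure_pmf (profile_pmf V E p \<mu>)"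
  let ?g = "\<lambda>S Xs. real (phi_real V \<mu> 1 2 I S Xs)"
  have "Phi V E p \<mu> 1 2 I (S\<union>R) \<le> (\<integral>Xs. ?g S Xs + (\<Sum>x\<in>R. ?g (S\<union>{x}) Xs - ?g S Xs) \<partial>?M)"
    unfolding Phi_def
    by (intro integral_mono intg phi_submod assms Bochner_Integration.integrable_add
         Bochner_Integration.integrable_sum Bochner_Integration.integrable_diff)
  also have "\<dots> = Phi V E p \<mu> 1 2 I S + (\<Sum>x\<in>R. Phi V E p \<mu> 1 2 I (S\<union>{x}) - Phi V E p \<mu> 1 2 I S)"
    unfolding Phi_def using assms
    by (simp add: intg Bochner_Integration.integral_add Bochner_Integration.integral_sum
        Bochner_Integration.integral_diff Bochner_Integration.integrable_sum
        Bochner_Integration.integrable_diff)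
  finally show ?thesis .
qed

lemma Phi_empty_I: "Phi V E p \<mu> 1 \<beta> {} S = 0"
proof -
  have "phi_real V \<mu> 1 \<beta> {} S Xs = 0" for Xs
    by (simp add: phi_real_def reach_count_def Defs.comp_def reach_empty)
  thus ?thesis by (simp add: Phi_def)
qed

lemma Phi_single_ge1:
  assumes "finite V" "a \<in> V" "(a,i) \<in> I" "i \<in> {1..\<mu>}" "j \<in> {1..\<mu>}" "j \<noteq> i"
  shows "1 \<le> Phi V E p \<mu> 1 2 I {(a,j)}"
proof -
  have pw: "1 \<le> real (phi_real V \<mu> 1 2 I {(a,j)} Xs)" for Xs
  proof -
    have "i \<in> camps \<mu> Xs I a" using assms by (auto simp: camps_def Defs.comp_def intro!: reach_self)
    hence c1: "1 \<le> card (camps \<mu> Xs I a)" by (metis card_0_eq empty_iff finite_camps less_one not_le)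
    have "{i,j} \<subseteq> camps \<mu> Xs (I \<union> {(a,j)}) a"
      using assms by (auto simp: camps_def Defs.comp_def intro!: reach_self)
    hence "card {i,j} \<le> card (camps \<mu> Xs (I \<union> {(a,j)}) a)" by (intro card_mono) auto
    hence "2 \<le> card (camps \<mu> Xs (I \<union> {(a,j)}) a)" using assms by simp
    hence "a \<in> NS V \<mu> 2 I {(a,j)} Xs" using c1 assms by (simp add: NS2_iff rc_camps)
    hence "card {a} \<le> card (NS V \<mu> 2 I {(a,j)} Xs)"
      by (intro card_mono finite_subset[OF NS_sub] assms) auto
    thus ?thesis unfolding phi_NS by simp
  qed
  have "1 = measure_pmf.expectation (profile_pmf V E p \<mu>) (\<lambda>_. 1::real)" by simp
  also have "\<dots> \<le> Phi V E p \<mu> 1 2 I {(a,j)}"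
    unfolding Phi_def by (rule integral_mono, simp, rule intg[OF assms(1)], rule pw)
  finally show ?thesis .
qed



lemma step_det:
  fixes f :: "'a set \<Rightarrow> real" and \<eta> :: real
  assumes mono: "\<And>A B. f A \<le> f (A \<union> B)"
    and sub: "\<And>A R. finite R \<Longrightarrow> f (A \<union> R) \<le> f A + (\<Sum>x\<in>R. f (A\<union>{x}) - f A)"
    and R: "finite R" "R \<noteq> {}"
    and inv: "f R - f S \<le> (1 - 1/card R)^n * f R + n*\<eta>"
    and NM: "\<And>x. x \<in> R \<Longrightarrow> x \<notin> S \<Longrightarrow> f(S\<union>{x}) \<le> f(S\<union>{c}) + \<eta>" and \<eta>: "0 \<le> \<eta>"
  shows "f R - f (S \<union> {c}) \<le> (1 - 1/card R)^(Suc n) * f R + (Suc n)*\<eta>"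
proof -
  define r where "r = real (card R)"
  have r1: "1 \<le> r" using R by (simp add: r_def Suc_le_eq card_gt_0_iff)
  have each: "f(S\<union>{x}) - f S \<le> f(S\<union>{c}) - f S + \<eta>" if x: "x \<in> R" for x
  proof (cases "x \<in> S")
    case True
    hence "S \<union> {x} = S" by auto
    thus ?thesis using mono[of S "{c}"] \<eta> by simp
  next
    case False thus ?thesis using NM x by simp
  qed
  have "f R \<le> f (S \<union> R)" using mono[of R S] by (simp add: Un_commute)
  also have "\<dots> \<le> f S + (\<Sum>x\<in>R. f(S\<union>{x}) - f S)" by (rule sub) fact
  also have "\<dots> \<le> f S + r*(f(S\<union>{c}) - f S + \<eta>)"
    using sum_bounded_above[of R "\<lambda>x. f(S\<union>{x}) - f S", OF each] by (simp add: r_def)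
  finally have A: "f R - f S \<le> r*(f(S\<union>{c}) - f S + \<eta>)" by simp
  define D where "D = f R - f S"
  have q0: "0 \<le> 1 - 1/r" "1 - 1/r \<le> 1" using r1 by (auto simp: field_simps)
  have B: "f(S\<union>{c}) - f S \<ge> D/r - \<eta>" using A r1 by (simp add: D_def field_simps)
  have "f R - f (S \<union> {c}) = D - (f(S\<union>{c}) - f S)" by (simp add: D_def)
  also have "\<dots> \<le> (1 - 1/r) * D + \<eta>" using B by (simp add: algebra_simps)
  also have "\<dots> \<le> (1 - 1/r) * ((1 - 1/r)^n * f R + n*\<eta>) + \<eta>"
    using inv q0 by (intro add_right_mono mult_left_mono) (auto simp: D_def r_def)
  also have "\<dots> = (1 - 1/r)^(Suc n) * f R + (1 - 1/r) * (n*\<eta>) + \<eta>" by (simp add: algebra_simps)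
  also have "\<dots> \<le> (1 - 1/r)^(Suc n) * f R + n*\<eta> + \<eta>"
    using q0 \<eta> by (intro add_right_mono add_left_mono mult_left_le_one_le) auto
  finally show ?thesis by (simp add: r_def algebra_simps)
qed

lemma exp_convex_bound:
  fixes x :: real assumes "0 \<le> x" "x \<le> 1"
  shows "exp (-x) \<le> 1 - (1 - 1/exp 1) * x"
proof -
  have cv: "convex_on UNIV exp"
    by (intro convex_on_realI[where f' = exp]) (auto intro!: derivative_eq_intros)
  have "exp ((1 - x) *\<^sub>R 0 + x *\<^sub>R (-1)) \<le> (1 - x) * exp 0 + x * exp (-1)"
    by (rule convex_onD[OF cv]) (use assms in auto)
  thus ?thesis by (simp add: exp_minus field_simps)
qed

lemma arith_main:
  fixes \<epsilon> X Y F :: real and k \<nu> m :: nat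
  assumes a: "a = 1 - 1/exp 1" and e: "0 < \<epsilon>" "\<epsilon> < a" and nu: "2 \<le> \<nu>"
    and k: "real k \<ge> 2 * (real \<nu> - 1) / \<epsilon>" and m: "m = k div (\<nu> - 1)"
    and XY: "X \<ge> Y" "Y \<ge> real \<nu>"
    and F: "F \<ge> (1 - (1 - 1/real k)^m) * X - \<epsilon> / exp 1"
  shows "F \<ge> (a - \<epsilon>) / real \<nu> * Y"
proof -
  have ee: "1 < exp (1::real)" by simp
  have a1: "a < 1" "0 < a" using ee unfolding a by (auto simp: field_simps)
  have nu1: "real \<nu> - 1 \<ge> 1" using nu by simp
  have h: "0 < (real \<nu> - 1) * (1 - \<epsilon>)" using nu1 e a1 by (intro mult_pos_pos) auto
  hence hh: "(real \<nu> - 1) * \<epsilon> < real \<nu> - 1" by (simp add: algebra_simps)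
  have "2 * (real \<nu> - 1) / \<epsilon> > 2 * (real \<nu> - 1)" using e hh
    by (subst pos_less_divide_eq) (auto simp: algebra_simps)
  hence kbig: "real k > 2 * (real \<nu> - 1)" using k by linarith
  hence kpos: "real k > 0" "k > 0" using nu1 by auto
  have ik: "1 / real k \<le> \<epsilon> / (2 * (real \<nu> - 1))"
    using k e nu1 kpos by (simp add: field_simps)
  have dm: "real k = real (k div (\<nu>-1)) * real (\<nu>-1) + real (k mod (\<nu>-1))"
    by (metis div_mult_mod_eq of_nat_add of_nat_mult)
  have "k mod (\<nu>-1) < \<nu>-1" using nu by simp
  hence md: "real (k mod (\<nu>-1)) < real (\<nu>-1)" by simp
  have mk1: "real (k div (\<nu>-1)) * real (\<nu>-1) \<le> real k" using dm by simp
  have mk2: "real k < (real (k div (\<nu>-1)) + 1) * real (\<nu>-1)" using dm md by (simp add: algebra_simps)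
  have nu1': "real (\<nu>-1) = real \<nu> - 1" using nu by simp
  define x where "x = real m / real k"
  have x1: "x \<le> 1" "0 \<le> x" using mk1 nu1 kpos unfolding x_def m nu1'
    by (auto simp: field_simps)
  have t1: "real k / (real \<nu> - 1) - 1 < real m" using mk2 nu1 unfolding m nu1'
    by (simp add: pos_divide_less_eq algebra_simps)
  have "1/(real \<nu> - 1) - 1/real k = (real k/(real \<nu> - 1) - 1)/real k"
    using kpos nu1 by (simp add: field_simps)
  also have "\<dots> \<le> real m / real k" using t1 kpos by (intro divide_right_mono) auto
  finally have x2: "x \<ge> 1/(real \<nu> - 1) - 1/real k" by (simp add: x_def)
  have x3: "x \<ge> (1 - \<epsilon>) / real \<nu>"
  proof -
    have s1: "1/(real \<nu> - 1) - 1/real k \<ge> 1/(real \<nu> - 1) - \<epsilon> / (2 * (real \<nu> - 1))" using ik by simp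
    have gen: "\<And>d::real. d > 0 \<Longrightarrow> 1/d - \<epsilon>/(2*d) = (1-\<epsilon>/2)/d" by (simp add: field_simps)
    have s2: "1/(real \<nu> - 1) - \<epsilon> / (2 * (real \<nu> - 1)) = (1 - \<epsilon>/2)/(real \<nu> - 1)"
      using gen[of "real \<nu> - 1"] nu1 by linarith
    have s3: "(1 - \<epsilon>/2)/(real \<nu> - 1) \<ge> (1 - \<epsilon>)/(real \<nu> - 1)" using nu1 e by (intro divide_right_mono) auto
    have s4: "(1 - \<epsilon>)/(real \<nu> - 1) \<ge> (1 - \<epsilon>) / real \<nu>"
      using nu1 e a1 by (intro divide_left_mono) auto
    show ?thesis using x2 s1 s2 s3 s4 by linarith
  qed
  have q: "(1 - 1/real k)^m \<le> exp (- x)"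
  proof -
    have "0 \<le> 1 - 1/real k" using kpos by (simp add: field_simps)
    moreover have "1 - 1/real k \<le> exp (-(1/real k))" using exp_ge_add_one_self[of "-(1/real k)"] by simp
    ultimately have "(1 - 1/real k)^m \<le> exp (-(1/real k))^m" by (simp add: power_mono)
    also have "\<dots> = exp (real m * (-(1/real k)))" by (rule exp_of_nat_mult[symmetric])
    finally show ?thesis by (simp add: x_def)
  qed
  have g: "1 - (1 - 1/real k)^m \<ge> a * (1 - \<epsilon>) / real \<nu>"
  proof -
    have "a * (1 - \<epsilon>) / real \<nu> \<le> a * x"
      using mult_left_mono[OF x3, of a] a1 by simp
    also have "a * x \<le> 1 - exp (-x)" using exp_convex_bound[OF x1(2) x1(1)] a by simp
    finally show ?thesis using q by linarith
  qed
  have g0: "0 \<le> a * (1 - \<epsilon>) / real \<nu>" using a1 e nu by simp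
  have "F \<ge> a * (1 - \<epsilon>) / real \<nu> * Y - \<epsilon> / exp 1"
  proof -
    have "a * (1 - \<epsilon>) / real \<nu> * Y \<le> a * (1 - \<epsilon>) / real \<nu> * X" using mult_left_mono[OF XY(1) g0] .
    also have "\<dots> \<le> (1 - (1 - 1/real k)^m) * X" using g XY nu by (intro mult_right_mono) auto
    finally show ?thesis using F by linarith
  qed
  moreover have "a * (1 - \<epsilon>) / real \<nu> * Y - \<epsilon> / exp 1 - (a - \<epsilon>) / real \<nu> * Y
      = \<epsilon> / exp 1 * (Y / real \<nu> - 1)"
    unfolding a using nu by (simp add: field_simps)
  moreover have "\<epsilon> / exp 1 * (Y / real \<nu> - 1) \<ge> 0" using XY e nu by (simp add: field_simps)
  ultimately show ?thesis by linarith
qed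



definition goodset :: "('a set \<Rightarrow> real) \<Rightarrow> 'a set \<Rightarrow> real \<Rightarrow> nat \<Rightarrow> 'a set \<Rightarrow> bool" where
  "goodset f W \<eta> n S \<longleftrightarrow>
     (\<forall>R. R \<subseteq> W \<and> R \<noteq> {} \<longrightarrow> f R - f S \<le> (1 - 1/real (card R))^n * f R + real n * \<eta>)"

lemma step_prob:
  fixes V :: "'v set" and I :: "('v \<times> nat) set" and e1 d1 :: real and n :: nat
  assumes fV: "finite V" "card V > 0"
    and tb: "\<forall>C g. finite C \<and> C \<noteq> {} \<longrightarrow> tb C g \<in> C \<and> (\<forall>c\<in>C. g c \<le> g (tb C g))"
    and e1: "0 < e1" and T: "0 < num_samples V e1 d1"
    and good: "goodset (Phi V E p \<mu> 1 2 I) (Vhat V \<mu>) (2*e1) n S"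
  shows "measure_pmf.prob (greedy_step V E p \<mu> tb (\<lambda>S Xs. real (phi_real V \<mu> 1 2 I S Xs)) e1 d1 S)
     {S'. \<not> goodset (Phi V E p \<mu> 1 2 I) (Vhat V \<mu>) (2*e1) (Suc n) S'}
     \<le> real (card (Vhat V \<mu>)) * (2 * exp (-2 * real (num_samples V e1 d1) * e1\<^sup>2 / (real (card V))\<^sup>2))"
proof -
  let ?f = "Phi V E p \<mu> 1 2 I"
  let ?g = "\<lambda>S Xs. real (phi_real V \<mu> 1 2 I S Xs)"
  let ?G = "{S'. \<not> goodset ?f (Vhat V \<mu>) (2*e1) (Suc n) S'}"
  define C where "C = Vhat V \<mu> - S"
  define Q where "Q = (\<lambda>c. approx_pmf V E p \<mu> (?g (S \<union> {c})) e1 d1)"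
  define \<beta> where "\<beta> = 2 * exp (-2 * real (num_samples V e1 d1) * e1\<^sup>2 / (real (card V))\<^sup>2)"
  define Bad where "Bad = (\<lambda>c. {vals::('v\<times>nat)\<Rightarrow>real. e1 \<le> \<bar>vals c - ?f (S \<union> {c})\<bar>})"
  have finVh: "finite (Vhat V \<mu>)" using fV by (simp add: Vhat_def)
  have finC: "finite C" using finVh by (simp add: C_def)
  have mono: "\<And>A B. ?f A \<le> ?f (A \<union> B)" using Phi_mono fV(1) by blast
  have sub: "\<And>A R. finite R \<Longrightarrow> ?f (A \<union> R) \<le> ?f A + (\<Sum>x\<in>R. ?f (A\<union>{x}) - ?f A)"
    using Phi_submod fV(1) by blast
  have incl: "(\<lambda>vals. S \<union> {tb C vals}) -` ?G \<subseteq> (\<Union>c\<in>C. Bad c)"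
  proof
    fix vals assume "vals \<in> (\<lambda>vals. S \<union> {tb C vals}) -` ?G"
    hence ng: "\<not> goodset ?f (Vhat V \<mu>) (2*e1) (Suc n) (S \<union> {tb C vals})" by simp
    show "vals \<in> (\<Union>c\<in>C. Bad c)"
    proof (rule ccontr)
      assume "vals \<notin> (\<Union>c\<in>C. Bad c)"
      hence close: "\<And>c. c \<in> C \<Longrightarrow> \<bar>vals c - ?f (S\<union>{c})\<bar> < e1" by (auto simp: Bad_def not_le)
      have NM: "?f (S \<union> {x}) \<le> ?f (S \<union> {tb C vals}) + 2*e1" if "x \<in> Vhat V \<mu>" "x \<notin> S" for x
      proof -
        have xC: "x \<in> C" using that by (simp add: C_def)
        hence "C \<noteq> {}" by auto
        hence tbC: "tb C vals \<in> C" "vals x \<le> vals (tb C vals)" using tb finC xC by auto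
        show ?thesis using close[OF xC] close[OF tbC(1)] tbC(2) by linarith
      qed
      have "goodset ?f (Vhat V \<mu>) (2*e1) (Suc n) (S \<union> {tb C vals})"
        unfolding goodset_def
      proof (intro allI impI)
        fix R assume R: "R \<subseteq> Vhat V \<mu> \<and> R \<noteq> {}"
        hence finR: "finite R" using finite_subset finVh by blast
        have Rne: "R \<noteq> {}" using R by simp
        have inv: "?f R - ?f S \<le> (1 - 1/real (card R))^n * ?f R + real n * (2*e1)"
          using good R by (simp add: goodset_def)
        have NM': "\<And>x. x \<in> R \<Longrightarrow> x \<notin> S \<Longrightarrow> ?f (S \<union> {x}) \<le> ?f (S \<union> {tb C vals}) + 2*e1"
          using NM R by blast
        have eta: "0 \<le> 2*e1" using e1 by simp
        show "?f R - ?f (S \<union> {tb C vals}) \<le> (1 - 1/real (card R))^(Suc n) * ?f R + real (Suc n) * (2*e1)"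
          by (rule step_det[where f = ?f, OF mono sub finR Rne inv NM' eta])
      qed
      with ng show False by contradiction
    qed
  qed
  have "measure_pmf.prob (greedy_step V E p \<mu> tb ?g e1 d1 S) ?G
        = measure_pmf.prob (Pi_pmf C 0 Q) ((\<lambda>vals. S \<union> {tb C vals}) -` ?G)"
    by (simp add: greedy_step_def C_def Q_def)
  also have "\<dots> \<le> measure_pmf.prob (Pi_pmf C 0 Q) (\<Union>c\<in>C. Bad c)"
    by (rule measure_pmf.finite_measure_mono[OF incl]) simp
  also have "\<dots> \<le> (\<Sum>c\<in>C. measure_pmf.prob (Pi_pmf C 0 Q) (Bad c))"
    by (rule measure_UNION_le[OF finC]) simp
  also have "\<dots> \<le> (\<Sum>c\<in>C. \<beta>)"
  proof (rule sum_mono)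
    fix c assume c: "c \<in> C"
    have "measure_pmf.prob (Pi_pmf C 0 Q) (Bad c)
        = measure_pmf.prob (map_pmf (\<lambda>v. v c) (Pi_pmf C 0 Q)) {y. e1 \<le> \<bar>y - ?f (S \<union> {c})\<bar>}"
      by (simp add: Bad_def vimage_def)
    also have "map_pmf (\<lambda>v. v c) (Pi_pmf C 0 Q) = Q c"
    proof -
      have "map_pmf (\<lambda>v. v c) (Pi_pmf C 0 Q) = (if c \<in> C then Q c else return_pmf 0)"
        by (rule Pi_pmf_component[OF finC])
      with c show ?thesis by (simp only: if_True)
    qed
    also have "measure_pmf.prob (Q c) {y. e1 \<le> \<bar>y - ?f (S \<union> {c})\<bar>} \<le> \<beta>"
    proof -
      have eq: "?f (S \<union> {c}) = measure_pmf.expectation (profile_pmf V E p \<mu>) (?g (S \<union> {c}))"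
        by (simp add: Phi_def)
      have bnd: "\<And>x. ?g (S \<union> {c}) x \<in> {0..real (card V)}" using phi_bound[OF fV(1)] by simp
      show ?thesis unfolding Q_def approx_pmf_def Let_def eq \<beta>_def
        by (rule hoeffding_pmf[OF T bnd]) (use fV e1 in auto)
    qed
    finally show "measure_pmf.prob (Pi_pmf C 0 Q) (Bad c) \<le> \<beta>" .
  qed
  also have "\<dots> = real (card C) * \<beta>" by simp
  also have "\<dots> \<le> real (card (Vhat V \<mu>)) * \<beta>"
  proof (rule mult_right_mono)
    show "real (card C) \<le> real (card (Vhat V \<mu>))" using finVh by (simp add: C_def card_mono)
    show "0 \<le> \<beta>" by (simp add: \<beta>_def)
  qed
  finally show ?thesis by (simp add: \<beta>_def)
qed



lemma loop_prob:
  fixes V :: "'v set" and I :: "('v \<times> nat) set" and e1 d1 :: real and n :: nat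
  assumes fV: "finite V" "card V > 0"
    and tb: "\<forall>C g. finite C \<and> C \<noteq> {} \<longrightarrow> tb C g \<in> C \<and> (\<forall>c\<in>C. g c \<le> g (tb C g))"
    and e1: "0 < e1" and T: "0 < num_samples V e1 d1"
  shows "emeasure (measure_pmf (greedy_loop V E p \<mu> tb (\<lambda>S Xs. real (phi_real V \<mu> 1 2 I S Xs)) e1 d1 n))
     {S. \<not> goodset (Phi V E p \<mu> 1 2 I) (Vhat V \<mu>) (2*e1) n S}
     \<le> ennreal (real n * (real (card (Vhat V \<mu>)) * (2 * exp (-2 * real (num_samples V e1 d1) * e1\<^sup>2 / (real (card V))\<^sup>2))))"
proof (induction n)
  case 0
  have "goodset (Phi V E p \<mu> 1 2 I) (Vhat V \<mu>) (2*e1) 0 {}"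
    unfolding goodset_def using Phi_nonneg[of V E p \<mu> 1 2 I "{}"] by simp
  thus ?case by simp
next
  case (Suc n)
  let ?f = "Phi V E p \<mu> 1 2 I"
  let ?g = "\<lambda>S Xs. real (phi_real V \<mu> 1 2 I S Xs)"
  let ?L = "greedy_loop V E p \<mu> tb ?g e1 d1"
  let ?B = "\<lambda>n. {S. \<not> goodset ?f (Vhat V \<mu>) (2*e1) n S}"
  define c where "c = real (card (Vhat V \<mu>)) * (2 * exp (-2 * real (num_samples V e1 d1) * e1\<^sup>2 / (real (card V))\<^sup>2))"
  have c0: "0 \<le> c" by (simp add: c_def)
  have "emeasure (measure_pmf (?L (Suc n))) (?B (Suc n))
      = (\<integral>\<^sup>+S. emeasure (measure_pmf (greedy_step V E p \<mu> tb ?g e1 d1 S)) (?B (Suc n)) \<partial>measure_pmf (?L n))"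
    by (simp only: greedy_loop.simps emeasure_bind_pmf)
  also have "\<dots> \<le> (\<integral>\<^sup>+S. (ennreal c + indicator (?B n) S) \<partial>measure_pmf (?L n))"
  proof (rule nn_integral_mono)
    fix S
    show "emeasure (measure_pmf (greedy_step V E p \<mu> tb ?g e1 d1 S)) (?B (Suc n)) \<le> ennreal c + indicator (?B n) S"
    proof (cases "goodset ?f (Vhat V \<mu>) (2*e1) n S")
      case True
      have "emeasure (measure_pmf (greedy_step V E p \<mu> tb ?g e1 d1 S)) (?B (Suc n))
          = ennreal (measure_pmf.prob (greedy_step V E p \<mu> tb ?g e1 d1 S) (?B (Suc n)))"
        by (simp add: measure_pmf.emeasure_eq_measure)
      also have "\<dots> \<le> ennreal c"
        unfolding c_def by (rule ennreal_leI, rule step_prob[OF fV tb e1 T True])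
      also have "\<dots> \<le> ennreal c + indicator (?B n) S" by simp
      finally show ?thesis .
    next
      case False
      have "emeasure (measure_pmf (greedy_step V E p \<mu> tb ?g e1 d1 S)) (?B (Suc n)) \<le> 1"
        by (rule measure_pmf.emeasure_le_1)
      also have "\<dots> = indicator (?B n) S" using False by simp
      also have "\<dots> \<le> ennreal c + indicator (?B n) S" by simp
      finally show ?thesis .
    qed
  qed
  also have "\<dots> = (\<integral>\<^sup>+S. ennreal c \<partial>measure_pmf (?L n)) + (\<integral>\<^sup>+S. indicator (?B n) S \<partial>measure_pmf (?L n))"
    by (rule nn_integral_add) auto
  also have "\<dots> = ennreal c + emeasure (measure_pmf (?L n)) (?B n)"
    by (simp add: measure_pmf.emeasure_space_1)
  also have "\<dots> \<le> ennreal c + ennreal (real n * c)"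
  proof -
    have IH: "emeasure (measure_pmf (?L n)) (?B n) \<le> ennreal (real n * c)"
      using Suc.IH by (simp only: c_def)
    show ?thesis by (rule add_left_mono[OF IH])
  qed
  also have "\<dots> = ennreal (c + real n * c)"
    by (rule ennreal_plus[symmetric]) (use c0 in auto)
  also have "c + real n * c = real (Suc n) * c" by (simp add: algebra_simps)
  finally show ?case by (simp only: c_def)
qed



lemma final_det:
  fixes V :: "'v set" and I Sstar S :: "('v \<times> nat) set"
  assumes fV: "finite V" and IV: "I \<subseteq> Vhat V \<mu>"
    and nu: "2 \<le> \<nu>" "\<nu> \<le> \<mu>"
    and e: "0 < \<epsilon>" "\<epsilon> < 1 - 1/exp 1" and k: "real k \<ge> 2 * (real \<nu> - 1) / \<epsilon>"
    and m: "m = k div (\<nu> - 1)" and m1: "1 \<le> m"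
    and Ss: "Sstar \<subseteq> Vhat V \<mu>" "card Sstar = k" "2 \<le> k"
    and good: "goodset (Phi V E p \<mu> 1 2 I) (Vhat V \<mu>) (\<epsilon> / exp 1 / real m) m S"
  shows "Phi V E p \<mu> 1 2 I S \<ge> (1 - 1 / exp 1 - \<epsilon>) / real \<nu> * Phi V E p \<mu> 1 \<nu> I Sstar"
proof -
  let ?f = "Phi V E p \<mu> 1 2 I"
  define Y where "Y = Phi V E p \<mu> 1 \<nu> I Sstar"
  define a where "a = 1 - 1 / exp (1::real)"
  have Y0: "0 \<le> Y" by (simp add: Y_def Phi_nonneg)
  have meta: "real m * (\<epsilon> / exp 1 / real m) = \<epsilon> / exp 1" using m1 by simp
  have ae: "0 < a - \<epsilon>" using e by (simp add: a_def)
  show ?thesis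
  proof (cases "Y \<le> real \<nu>")
    case True
    show ?thesis
    proof (cases "I = {}")
      case True
      have "Y = 0" unfolding Y_def True by (rule Phi_empty_I)
      thus ?thesis using Phi_nonneg[of V E p \<mu> 1 2 I S] by (simp add: Y_def)
    next
      case False
      then obtain a0 i0 where ai: "(a0, i0) \<in> I" by auto
      hence a0: "a0 \<in> V" "i0 \<in> {1..\<mu>}" using IV by (auto simp: Vhat_def)
      define j where "j = (if i0 = 1 then 2 else (1::nat))"
      have j: "j \<in> {1..\<mu>}" "j \<noteq> i0" using nu a0 by (auto simp: j_def)
      have R1: "1 \<le> ?f {(a0, j)}" by (rule Phi_single_ge1[OF fV a0(1) ai a0(2) j])
      have "{(a0,j)} \<subseteq> Vhat V \<mu>" using a0 j by (auto simp: Vhat_def)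
      hence "?f {(a0,j)} - ?f S \<le> (1 - 1/real (card {(a0,j)}))^m * ?f {(a0,j)} + real m * (\<epsilon> / exp 1 / real m)"
        using good unfolding goodset_def by blast
      moreover have "(0::real)^m = 0" using m1 by simp
      ultimately have "?f {(a0,j)} - ?f S \<le> \<epsilon> / exp 1" using meta by simp
      hence fS: "?f S \<ge> 1 - \<epsilon> / exp 1" using R1 by linarith
      have "(a - \<epsilon>) / real \<nu> * Y \<le> (a - \<epsilon>) / real \<nu> * real \<nu>"
        using True ae nu by (intro mult_left_mono) auto
      also have "\<dots> = a - \<epsilon>" using nu by simp
      also have "\<dots> \<le> 1 - \<epsilon> / exp 1"
      proof -
        have ee: "1 \<le> exp (1::real)" by simp
        have "\<epsilon> * 1 \<le> \<epsilon> * exp 1" using e ee by (intro mult_left_mono) auto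
        hence "\<epsilon> / exp 1 \<le> \<epsilon>" by (subst pos_divide_le_eq) auto
        moreover have "0 \<le> 1 / exp (1::real)" by simp
        ultimately have "\<epsilon> / exp 1 \<le> \<epsilon> + 1 / exp 1" by linarith
        thus ?thesis by (simp add: a_def)
      qed
      finally show ?thesis using fS by (simp add: Y_def a_def)
    qed
  next
    case False
    have SsV: "Sstar \<noteq> {}" using Ss by auto
    have "?f Sstar - ?f S \<le> (1 - 1/real (card Sstar))^m * ?f Sstar + real m * (\<epsilon> / exp 1 / real m)"
      using good Ss SsV unfolding goodset_def by blast
    hence F: "?f S \<ge> (1 - (1 - 1/real k)^m) * ?f Sstar - \<epsilon> / exp 1"
      using meta Ss by (simp add: algebra_simps)
    have XY: "?f Sstar \<ge> Y" unfolding Y_def by (rule Phi_nu_le[OF fV nu(1)])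
    have "?f S \<ge> (a - \<epsilon>) / real \<nu> * Y"
      by (rule arith_main[OF a_def e[folded a_def] nu(1) k m XY _ F]) (use False in simp)
    thus ?thesis by (simp add: Y_def a_def)
  qed
qed

theorem mainTheorem10:
  fixes V :: "'v set" and E :: "('v \<times> 'v) set" and p :: "nat \<Rightarrow> 'v \<times> 'v \<Rightarrow> real"
    and I :: "('v \<times> nat) set" and \<mu> \<nu> k :: nat and \<epsilon> \<delta> :: real
    and tb :: "('v \<times> nat) set \<Rightarrow> ('v \<times> nat \<Rightarrow> real) \<Rightarrow> 'v \<times> nat"
    and Sstar :: "('v \<times> nat) set"
  assumes "finite V" and "E \<subseteq> V \<times> V"
    and "\<forall>i\<in>{1..\<mu>}. \<forall>e\<in>E. 0 \<le> p i e \<and> p i e \<le> 1"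
    and "I \<subseteq> Vhat V \<mu>"
    and "2 \<le> \<nu>" and "\<nu> \<le> \<mu>" and "2 \<le> k" and "\<nu> \<le> k" and "k \<le> \<nu> * card V" and "\<mu> \<le> card V"
    and "0 < \<epsilon>" and "real k \<ge> 2 * (real \<nu> - 1) / \<epsilon>"
    and "0 < \<delta>" and "\<delta> < 1"
    and "\<forall>C g. finite C \<and> C \<noteq> {} \<longrightarrow> tb C g \<in> C \<and> (\<forall>c\<in>C. g c \<le> g (tb C g))"
    and "Sstar \<subseteq> Vhat V \<mu>" and "card Sstar = k"
    and "\<forall>S. S \<subseteq> Vhat V \<mu> \<and> card S = k \<longrightarrow> Phi V E p \<mu> 1 \<nu> I S \<le> Phi V E p \<mu> 1 \<nu> I Sstar"
  shows "measure_pmf.prob (greedyiter_first V E p \<mu> tb \<epsilon> \<delta> I \<nu> k)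
           {S. Phi V E p \<mu> 1 2 I S \<ge> (1 - 1 / exp 1 - \<epsilon>) / real \<nu> * Phi V E p \<mu> 1 \<nu> I Sstar}
         \<ge> 1 - \<delta> / real \<nu>"
proof -
  note fV = assms(1) and IV = assms(4) and nu = assms(5,6) and k2 = assms(7) and muV = assms(10)
    and e = assms(11) and k = assms(12) and d = assms(13,14) and tb = assms(15) and Ss = assms(16,17)
  let ?f = "Phi V E p \<mu> 1 2 I"
  let ?g = "\<lambda>S Xs. real (phi_real V \<mu> 1 2 I S Xs)"
  define Y where "Y = Phi V E p \<mu> 1 \<nu> I Sstar"
  define Ev where "Ev = {S. ?f S \<ge> (1 - 1 / exp 1 - \<epsilon>) / real \<nu> * Y}"
  have Y0: "0 \<le> Y" by (simp add: Y_def Phi_nonneg)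
  have cV: "card V > 0" using nu muV by linarith
  have nu0: "real \<nu> > 0" using nu by simp
  have dnu: "0 \<le> \<delta> / real \<nu>" using d nu0 by simp
  show ?thesis
  proof (cases "\<epsilon> \<ge> 1 - 1 / exp 1")
    case True
    have "Ev = UNIV"
    proof -
      have "(1 - 1 / exp 1 - \<epsilon>) / real \<nu> * Y \<le> 0"
        using True nu0 Y0 by (intro mult_nonpos_nonneg divide_nonpos_pos) auto
      thus ?thesis unfolding Ev_def using order_trans[OF _ Phi_nonneg] by blast
    qed
    thus ?thesis using dnu by (simp add: Ev_def Y_def)
  next
    case False
    hence e2: "\<epsilon> < 1 - 1 / exp 1" by simp
    define m where "m = k div (\<nu> - 1)"
    define Vh where "Vh = Vhat V \<mu>"
    define e1 where "e1 = \<epsilon> / 2 / (exp 1 * real m)"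
    define d1 where "d1 = \<delta> / real \<nu> / (real m * real (card Vh))"
    define T where "T = num_samples V e1 d1"
    define \<beta> where "\<beta> = 2 * exp (-2 * real T * e1\<^sup>2 / (real (card V))\<^sup>2)"
    have ee: "1 < exp (1::real)" by simp
    have e1': "\<epsilon> < 1" using e2 by (smt (verit) ee divide_pos_pos)
    have kbig: "real k > 2 * (real \<nu> - 1)"
    proof -
      have h: "0 < (real \<nu> - 1) * (1 - \<epsilon>)" using nu e1' by (intro mult_pos_pos) auto
      hence hh: "(real \<nu> - 1) * \<epsilon> < real \<nu> - 1" by (simp add: algebra_simps)
      have "2 * (real \<nu> - 1) / \<epsilon> > 2 * (real \<nu> - 1)" using e hh
        by (subst pos_less_divide_eq) (auto simp: algebra_simps)
      thus ?thesis using k by linarith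
    qed
    have m1: "1 \<le> m"
    proof -
      have "real (2 * (\<nu> - 1)) < real k" using kbig nu by (simp add: of_nat_diff)
      hence "2 * (\<nu> - 1) < k" by (simp only: of_nat_less_iff)
      hence "\<nu> - 1 \<le> k" "0 < \<nu> - 1" using nu by auto
      hence "0 < k div (\<nu> - 1)" by (simp add: div_greater_zero_iff)
      thus ?thesis unfolding m_def by simp
    qed
    have cVh: "card Vh = card V * \<mu>" by (simp add: Vh_def Vhat_def card_cartesian_product)
    have "0 < card V * \<mu>" using cV nu by simp
    hence c1: "1 \<le> card Vh" using cVh by simp
    hence cVh0: "real (card Vh) \<ge> 1" by simp
    have e1p: "0 < e1" using e m1 by (simp add: e1_def)
    have d1p: "0 < d1" using d m1 nu0 cVh0 by (simp add: d1_def)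
    have d1h: "d1 \<le> 1/2"
    proof -
      have mV: "1 * 1 \<le> real m * real (card Vh)" using m1 cVh0 by (intro mult_mono) auto
      have "\<delta> / real \<nu> * 1 \<le> \<delta> / real \<nu> * (real m * real (card Vh))"
        using mV dnu by (intro mult_left_mono) auto
      hence "d1 \<le> \<delta> / real \<nu>" unfolding d1_def using mV by (subst pos_divide_le_eq) auto
      also have "\<dots> \<le> 1 / 2" using d nu by (simp add: field_simps)
      finally show ?thesis .
    qed
    have lnpos: "0 < ln (1 / d1)" using d1p d1h by simp
    have Tge: "real T \<ge> (real (card V))\<^sup>2 * ln (1 / d1) / e1\<^sup>2"
      unfolding T_def num_samples_def by linarith
    have Tpos: "0 < T"
    proof -
      have "0 < (real (card V))\<^sup>2 * ln (1 / d1) / e1\<^sup>2" using cV lnpos e1p by simp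
      thus ?thesis using Tge by simp
    qed
    have \<beta>le: "\<beta> \<le> 2 * d1\<^sup>2"
    proof -
      have "2 * ln (1 / d1) \<le> 2 * real T * e1\<^sup>2 / (real (card V))\<^sup>2"
        using Tge cV e1p by (simp add: field_simps)
      hence "exp (-2 * real T * e1\<^sup>2 / (real (card V))\<^sup>2) \<le> exp (- (2 * ln (1 / d1)))" by simp
      also have "exp (- (2 * ln (1 / d1))) = d1\<^sup>2"
        using d1p by (simp add: exp_minus exp_of_nat_mult[of 2, simplified] ln_div power2_eq_square exp_add)
      finally show ?thesis by (simp add: \<beta>_def)
    qed
    have fin_eq: "greedyiter_first V E p \<mu> tb \<epsilon> \<delta> I \<nu> k = greedy_loop V E p \<mu> tb ?g e1 d1 m"
      by (simp add: greedyiter_first_def greedy_pmf_def e1_def d1_def m_def Vh_def)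
    have bad: "emeasure (measure_pmf (greedy_loop V E p \<mu> tb ?g e1 d1 m)) {S. \<not> goodset ?f Vh (2*e1) m S}
       \<le> ennreal (real m * (real (card Vh) * \<beta>))"
      unfolding Vh_def \<beta>_def T_def by (rule loop_prob[OF fV cV tb e1p]) (use Tpos T_def in simp)
    have bnd: "real m * (real (card Vh) * \<beta>) \<le> \<delta> / real \<nu>"
    proof -
      have "real m * (real (card Vh) * \<beta>) \<le> real m * (real (card Vh) * (2 * d1\<^sup>2))"
        using \<beta>le m1 by (intro mult_left_mono) auto
      also have "\<dots> = 2 * d1 * (\<delta> / real \<nu>)"
        using m1 cVh0 by (simp add: d1_def power2_eq_square field_simps)
      also have "\<dots> \<le> \<delta> / real \<nu>"
      proof -
        have "0 \<le> 2 * d1" "2 * d1 \<le> 1" using d1h d1p by auto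
        thus ?thesis using mult_right_mono[OF \<open>2 * d1 \<le> 1\<close> dnu] by simp
      qed
      finally show ?thesis .
    qed
    have sub: "UNIV - Ev \<subseteq> {S. \<not> goodset ?f Vh (2*e1) m S}"
    proof
      fix S assume "S \<in> UNIV - Ev"
      moreover have "goodset ?f Vh (2*e1) m S \<Longrightarrow> S \<in> Ev"
      proof -
        assume g: "goodset ?f Vh (2*e1) m S"
        have "2 * e1 = \<epsilon> / exp 1 / real m" by (simp add: e1_def field_simps)
        with g have g': "goodset ?f (Vhat V \<mu>) (\<epsilon> / exp 1 / real m) m S" by (simp add: Vh_def)
        show "S \<in> Ev" unfolding Ev_def Y_def
          using final_det[OF fV IV nu e e2 k m_def m1 Ss k2 g'] by simp
      qed
      ultimately show "S \<in> {S. \<not> goodset ?f Vh (2*e1) m S}" by auto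
    qed
    let ?P = "greedy_loop V E p \<mu> tb ?g e1 d1 m"
    have "measure_pmf.prob ?P (UNIV - Ev) \<le> measure_pmf.prob ?P {S. \<not> goodset ?f Vh (2*e1) m S}"
      by (rule measure_pmf.finite_measure_mono[OF sub]) simp
    also have "\<dots> \<le> real m * (real (card Vh) * \<beta>)"
    proof -
      have cnn: "0 \<le> real m * (real (card Vh) * \<beta>)" by (simp add: \<beta>_def)
      show ?thesis using bad cnn by (simp add: measure_pmf.emeasure_eq_measure)
    qed
    also have "\<dots> \<le> \<delta> / real \<nu>" by (rule bnd)
    finally have "measure_pmf.prob ?P (UNIV - Ev) \<le> \<delta> / real \<nu>" .
    moreover have "measure_pmf.prob ?P (UNIV - Ev) = 1 - measure_pmf.prob ?P Ev"
      using measure_pmf.prob_compl[of Ev ?P] by simp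
    ultimately show ?thesis unfolding fin_eq[symmetric] Ev_def Y_def by simp
  qed
qed

end
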